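(* The empty space is the only finitely generated object of the category $\mathsf{Top}_0$ of T$_0$-spaces and continuous maps.
   Context: An object $X$ of a category $\mathcal{C}$ is finitely generated if for every directed diagram $(Z_i)_{i\in I}$ in $\mathcal{C}$ (indexed by a directed poset, i.e. every finite subset has an upper bound) all of whose connecting morphisms $z_{i,j}$ are monomorphisms, with colimit cocone $c_i:Z_i\to Z$ in $\mathcal{C}$, every morphism $f:X\to Z$ factorizes as $f=c_i\cdot g$ for some $i$ and $g:X\to Z_i$, and if also $f=c_i\cdot g'$ then $z_{i,j}\cdot g=z_{i,j}\cdot g'$ for some connecting morphism $z_{i,j}$. *)

theory Defs
  imports "HOL-Analysis.Analysis"
begin

text \<open>The category Top_0: objects are T0 topological spaces (t0_space X for X :: 'a topology),
  morphisms are continuous maps; two morphisms A -> B are equal iff they agree on topspace A.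
  Since HOL cannot quantify over types inside a formula, the "all objects" quantifications
  are taken over spaces carried by explicitly given types, passed as itself-arguments.\<close>

definition directed_poset :: "'i set \<Rightarrow> ('i \<Rightarrow> 'i \<Rightarrow> bool) \<Rightarrow> bool" where
  "directed_poset I le \<longleftrightarrow>
     (\<forall>i\<in>I. le i i) \<and>
     (\<forall>i\<in>I. \<forall>j\<in>I. \<forall>k\<in>I. le i j \<and> le j k \<longrightarrow> le i k) \<and>
     (\<forall>i\<in>I. \<forall>j\<in>I. le i j \<and> le j i \<longrightarrow> i = j) \<and>
     (\<forall>F. finite F \<and> F \<subseteq> I \<longrightarrow> (\<exists>u\<in>I. \<forall>i\<in>F. le i u))"

definition top0_mono :: "'w itself \<Rightarrow> 'a topology \<Rightarrow> 'b topology \<Rightarrow> ('a \<Rightarrow> 'b) \<Rightarrow> bool" where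
  "top0_mono _ A B m \<longleftrightarrow> continuous_map A B m \<and>
     (\<forall>(W::'w topology) g h. t0_space W \<and> continuous_map W A g \<and> continuous_map W A h \<and>
        (\<forall>x\<in>topspace W. m (g x) = m (h x)) \<longrightarrow> (\<forall>x\<in>topspace W. g x = h x))"

definition top0_mono_directed_diagram ::
  "'w itself \<Rightarrow> 'i set \<Rightarrow> ('i \<Rightarrow> 'i \<Rightarrow> bool) \<Rightarrow> ('i \<Rightarrow> 'z topology) \<Rightarrow> ('i \<Rightarrow> 'i \<Rightarrow> 'z \<Rightarrow> 'z) \<Rightarrow> bool" where
  "top0_mono_directed_diagram W I le Z z \<longleftrightarrow>
     directed_poset I le \<and>
     (\<forall>i\<in>I. t0_space (Z i)) \<and>
     (\<forall>i\<in>I. \<forall>j\<in>I. le i j \<longrightarrow> top0_mono W (Z i) (Z j) (z i j)) \<and>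
     (\<forall>i\<in>I. \<forall>x\<in>topspace (Z i). z i i x = x) \<and>
     (\<forall>i\<in>I. \<forall>j\<in>I. \<forall>k\<in>I. le i j \<and> le j k \<longrightarrow>
        (\<forall>x\<in>topspace (Z i). z j k (z i j x) = z i k x))"

definition is_cocone ::
  "'i set \<Rightarrow> ('i \<Rightarrow> 'i \<Rightarrow> bool) \<Rightarrow> ('i \<Rightarrow> 'z topology) \<Rightarrow> ('i \<Rightarrow> 'i \<Rightarrow> 'z \<Rightarrow> 'z)
     \<Rightarrow> 'c topology \<Rightarrow> ('i \<Rightarrow> 'z \<Rightarrow> 'c) \<Rightarrow> bool" where
  "is_cocone I le Z z C c \<longleftrightarrow>
     (\<forall>i\<in>I. continuous_map (Z i) C (c i)) \<and>
     (\<forall>i\<in>I. \<forall>j\<in>I. le i j \<longrightarrow> (\<forall>x\<in>topspace (Z i). c j (z i j x) = c i x))"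

definition top0_colimit ::
  "'w itself \<Rightarrow> 'i set \<Rightarrow> ('i \<Rightarrow> 'i \<Rightarrow> bool) \<Rightarrow> ('i \<Rightarrow> 'z topology) \<Rightarrow> ('i \<Rightarrow> 'i \<Rightarrow> 'z \<Rightarrow> 'z)
     \<Rightarrow> 'c topology \<Rightarrow> ('i \<Rightarrow> 'z \<Rightarrow> 'c) \<Rightarrow> bool" where
  "top0_colimit _ I le Z z C c \<longleftrightarrow>
     t0_space C \<and> is_cocone I le Z z C c \<and>
     (\<forall>(W::'w topology) d. t0_space W \<and> is_cocone I le Z z W d \<longrightarrow>
        (\<exists>u. continuous_map C W u \<and> (\<forall>i\<in>I. \<forall>x\<in>topspace (Z i). u (c i x) = d i x)) \<and>
        (\<forall>u v. continuous_map C W u \<and> continuous_map C W v \<and>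
           (\<forall>i\<in>I. \<forall>x\<in>topspace (Z i). u (c i x) = d i x) \<and>
           (\<forall>i\<in>I. \<forall>x\<in>topspace (Z i). v (c i x) = d i x) \<longrightarrow>
           (\<forall>y\<in>topspace C. u y = v y)))"

definition top0_finitely_generated ::
  "'i itself \<Rightarrow> 'z itself \<Rightarrow> 'c itself \<Rightarrow> 'w itself \<Rightarrow> 'a topology \<Rightarrow> bool" where
  "top0_finitely_generated _ _ _ W X \<longleftrightarrow>
     (\<forall>(I::'i set) le (Z::'i \<Rightarrow> 'z topology) z (C::'c topology) c.
        top0_mono_directed_diagram W I le Z z \<and> top0_colimit W I le Z z C c \<longrightarrow>
        (\<forall>f. continuous_map X C f \<longrightarrow>
           (\<exists>i\<in>I. \<exists>g. continuous_map X (Z i) g \<and> (\<forall>x\<in>topspace X. f x = c i (g x))) \<and>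
           (\<forall>i\<in>I. \<forall>g g'. continuous_map X (Z i) g \<and> continuous_map X (Z i) g' \<and>
               (\<forall>x\<in>topspace X. f x = c i (g x)) \<and> (\<forall>x\<in>topspace X. f x = c i (g' x)) \<longrightarrow>
               (\<exists>j\<in>I. le i j \<and> (\<forall>x\<in>topspace X. z i j (g x) = z i j (g' x))))))"

end

theory Submission
  imports Defs
begin

definition PT :: "nat \<Rightarrow> nat set \<Rightarrow> bool" where
  "PT n U \<longleftrightarrow> (0 \<in> U \<longrightarrow> (\<exists>m. \<forall>k\<ge>m. k+2 \<in> U)) \<and> (\<forall>k<n. k+2 \<in> U \<longrightarrow> 1 \<in> U) \<and> (1 \<in> U \<longrightarrow> 0 \<in> U)"

definition PC :: "nat set \<Rightarrow> bool" where
  "PC U \<longleftrightarrow> 1 \<notin> U \<and> (0 \<in> U \<longrightarrow> (\<exists>m. \<forall>k\<ge>m. k+2 \<in> U)) \<and> (\<forall>k. k+2 \<in> U \<longrightarrow> 0 \<in> U)"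

lemma tail_int:
  fixes S T' :: "nat set"
  assumes "\<exists>m. \<forall>k\<ge>m. k+2 \<in> S" "\<exists>m. \<forall>k\<ge>m. k+2 \<in> T'"
  shows "\<exists>m. \<forall>k\<ge>m. k+2 \<in> S \<inter> T'"
proof -
  obtain m1 where m1: "\<forall>k\<ge>m1. k+2 \<in> S" using assms(1) by blast
  obtain m2 where m2: "\<forall>k\<ge>m2. k+2 \<in> T'" using assms(2) by blast
  have "\<forall>k\<ge>m1+m2. k+2 \<in> S \<inter> T'"
  proof (intro allI impI)
    fix k :: nat assume "k \<ge> m1+m2"
    then have "k \<ge> m1" "k \<ge> m2" by linarith+
    then show "k+2 \<in> S \<inter> T'" using m1 m2 by blast
  qed
  then show ?thesis by (rule exI)
qed

lemma tail_union:
  fixes U :: "nat set"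
  assumes "U \<in> K" "\<exists>m. \<forall>k\<ge>m. k+2 \<in> U"
  shows "\<exists>m. \<forall>k\<ge>m. k+2 \<in> \<Union>K"
proof -
  obtain m where m: "\<forall>k\<ge>m. k+2 \<in> U" using assms(2) by blast
  have "\<forall>k\<ge>m. k+2 \<in> \<Union>K" using m assms(1) by blast
  then show ?thesis by (rule exI)
qed

lemma istop_PT: "istopology (PT n)"
  unfolding istopology_def
proof (intro conjI allI impI)
  fix S T' assume S: "PT n S" and T: "PT n T'"
  show "PT n (S \<inter> T')" unfolding PT_def
  proof (intro conjI impI allI)
    assume "0 \<in> S \<inter> T'"
    then show "\<exists>m. \<forall>k\<ge>m. k+2 \<in> S \<inter> T'" using S T unfolding PT_def by (intro tail_int) auto
  qed (use S T in \<open>auto simp: PT_def\<close>)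
next
  fix K assume K: "\<forall>U\<in>K. PT n U"
  show "PT n (\<Union>K)" unfolding PT_def
  proof (intro conjI impI allI)
    assume "0 \<in> \<Union>K"
    then obtain U where "U \<in> K" "0 \<in> U" by blast
    then show "\<exists>m. \<forall>k\<ge>m. k+2 \<in> \<Union>K" using K unfolding PT_def by (intro tail_union[of U]) auto
  qed (use K in \<open>auto simp: PT_def\<close>)
qed

lemma istop_PC: "istopology PC"
  unfolding istopology_def
proof (intro conjI allI impI)
  fix S T' assume S: "PC S" and T: "PC T'"
  show "PC (S \<inter> T')" unfolding PC_def
  proof (intro conjI impI allI)
    assume "0 \<in> S \<inter> T'"
    then show "\<exists>m. \<forall>k\<ge>m. k+2 \<in> S \<inter> T'" using S T unfolding PC_def by (intro tail_int) auto
  qed (use S T in \<open>auto simp: PC_def\<close>)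
next
  fix K assume K: "\<forall>U\<in>K. PC U"
  show "PC (\<Union>K)" unfolding PC_def
  proof (intro conjI impI allI)
    assume "0 \<in> \<Union>K"
    then obtain U where "U \<in> K" "0 \<in> U" by blast
    then show "\<exists>m. \<forall>k\<ge>m. k+2 \<in> \<Union>K" using K unfolding PC_def by (intro tail_union[of U]) auto
  qed (use K in \<open>auto simp: PC_def\<close>)
qed

definition T :: "nat \<Rightarrow> nat topology" where "T n = topology (PT n)"
definition CC :: "nat topology" where "CC = topology PC"
definition cc :: "nat \<Rightarrow> nat \<Rightarrow> nat" where "cc i x = (if x = 1 then 0 else x)"

lemma openin_T: "openin (T n) U = PT n U" by (simp add: T_def istop_PT)
lemma openin_CC: "openin CC U = PC U" by (simp add: CC_def istop_PC)

lemma topspace_T: "topspace (T n) = UNIV"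
proof -
  have "PT n UNIV" unfolding PT_def by auto
  then show ?thesis unfolding topspace_def openin_T by auto
qed

lemma topspace_CC: "topspace CC = UNIV - {1}"
proof -
  have "PC (UNIV - {1})" unfolding PC_def by auto
  moreover have "\<And>U. PC U \<Longrightarrow> U \<subseteq> UNIV - {1}" unfolding PC_def by auto
  ultimately show ?thesis unfolding topspace_def openin_CC by blast
qed

lemma ge2: "\<not> (x::nat) < 2 \<Longrightarrow> \<exists>k. x = k+2"
  by (rule exI[of _ "x-2"]) simp

lemma t0_T: "t0_space (T n)"
  unfolding t0_space_def topspace_T
proof (intro ballI impI)
  fix x y :: nat assume "x \<noteq> y"
  define A where "A = {a::nat. a \<ge> n+2}"
  have tA: "\<exists>m. \<forall>k\<ge>m. k+2 \<in> A" unfolding A_def by (rule exI[of _ n]) simp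
  have A0: "0 \<notin> A" "1 \<notin> A" unfolding A_def by simp_all
  have Ak: "k+2 \<in> A \<longleftrightarrow> k \<ge> n" for k unfolding A_def by simp
  have o1: "PT n ({0} \<union> A)" unfolding PT_def using tA A0 Ak by auto
  have o2: "PT n ({0,1} \<union> A)" unfolding PT_def using tA A0 Ak by auto
  have o3: "PT n {k+2}" if "k \<ge> n" for k unfolding PT_def using that by auto
  have o4: "PT n ({k+2,0,1} \<union> A)" for k unfolding PT_def using tA by auto
  have key: "\<exists>U. PT n U \<and> ((x \<in> U \<and> y \<notin> U) \<or> (y \<in> U \<and> x \<notin> U))"
  proof (cases "x < 2")
    case xs: True
    show ?thesis
    proof (cases "y < 2")
      case True
      then have "(x = 0 \<and> y = 1) \<or> (x = 1 \<and> y = 0)" using xs \<open>x \<noteq> y\<close> by linarith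
      then show ?thesis using o1 A0 by (intro exI[of _ "{0} \<union> A"]) auto
    next
      case False
      then obtain j where j: "y = j+2" using ge2 by blast
      show ?thesis
      proof (cases "j \<ge> n")
        case True then show ?thesis using o3 j xs by (intro exI[of _ "{y}"]) auto
      next
        case jn: False
        then have yA: "y \<notin> A" using Ak j by simp
        show ?thesis
        proof (cases "x = 0")
          case True then show ?thesis using o1 yA j by (intro exI[of _ "{0} \<union> A"]) auto
        next
          case x1: False
          then have "x = 1" using xs by linarith
          then show ?thesis using o2 yA j by (intro exI[of _ "{0,1} \<union> A"]) auto
        qed
      qed
    qed
  next
    case xb: False
    then obtain k where k: "x = k+2" using ge2 by blast
    show ?thesis
    proof (cases "k \<ge> n")
      case True then show ?thesis using o3 k \<open>x \<noteq> y\<close> by (intro exI[of _ "{x}"]) auto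
    next
      case kn: False
      then have xA: "x \<notin> A" using Ak k by simp
      show ?thesis
      proof (cases "y < 2")
        case True
        show ?thesis
        proof (cases "y = 0")
          case True then show ?thesis using o1 xA k by (intro exI[of _ "{0} \<union> A"]) auto
        next
          case False
          then have "y = 1" using \<open>y < 2\<close> by linarith
          then show ?thesis using o2 xA k by (intro exI[of _ "{0,1} \<union> A"]) auto
        qed
      next
        case False
        then obtain j where j: "y = j+2" using ge2 by blast
        show ?thesis
        proof (cases "j \<ge> n")
          case True then show ?thesis using o3 j \<open>x \<noteq> y\<close> by (intro exI[of _ "{y}"]) auto
        next
          case False
          then have yA: "y \<notin> A" using Ak j by simp
          then show ?thesis using o4[of k] k j \<open>x \<noteq> y\<close> by (intro exI[of _ "{k+2,0,1} \<union> A"]) auto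
        qed
      qed
    qed
  qed
  then show "\<exists>U. openin (T n) U \<and> (x \<notin> U) = (y \<in> U)" unfolding openin_T by blast
qed

lemma t0_CC: "t0_space CC"
  unfolding t0_space_def topspace_CC
proof (intro ballI impI)
  fix x y :: nat assume x: "x \<in> UNIV - {1}" and y: "y \<in> UNIV - {1}" and "x \<noteq> y"
  define B where "B m = {a. a \<ge> m+2}" for m :: nat
  have o1: "PC ({0} \<union> B m)" for m unfolding PC_def B_def by auto
  have o2: "PC ({k+2, 0} \<union> B m)" for k m unfolding PC_def B_def by auto
  have key: "\<exists>U. PC U \<and> ((x \<in> U \<and> y \<notin> U) \<or> (y \<in> U \<and> x \<notin> U))"
  proof (cases "x = 0")
    case True
    then have "\<not> y < 2" using y \<open>x \<noteq> y\<close> by auto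
    then obtain j where j: "y = j+2" using ge2 by blast
    then show ?thesis using o1[of "j+1"] True by (intro exI[of _ "{0} \<union> B (j+1)"]) (auto simp: B_def)
  next
    case False
    then have "\<not> x < 2" using x by auto
    then obtain k where k: "x = k+2" using ge2 by blast
    show ?thesis
    proof (cases "y = 0")
      case True
      then show ?thesis using o1[of "k+1"] k by (intro exI[of _ "{0} \<union> B (k+1)"]) (auto simp: B_def)
    next
      case False
      then have "\<not> y < 2" using y by auto
      then obtain j where j: "y = j+2" using ge2 by blast
      then show ?thesis using o2[of k "max k j + 1"] k \<open>x \<noteq> y\<close>
        by (intro exI[of _ "{k+2, 0} \<union> B (max k j + 1)"]) (auto simp: B_def)
    qed
  qed
  then show "\<exists>U. openin CC U \<and> (x \<notin> U) = (y \<in> U)" unfolding openin_CC by blast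
qed

lemma directed_nat: "directed_poset (UNIV::nat set) (\<le>)"
  unfolding directed_poset_def
  by (auto simp: finite_nat_set_iff_bounded_le)

lemma cont_id_T: "i \<le> j \<Longrightarrow> continuous_map (T i) (T j) (\<lambda>x. x)"
  unfolding continuous_map topspace_T openin_T PT_def
  apply auto using less_le_trans by blast

lemma mono_T: "i \<le> j \<Longrightarrow> top0_mono W (T i) (T j) (\<lambda>x. x)"
  unfolding top0_mono_def using cont_id_T by auto

lemma diagram: "top0_mono_directed_diagram W (UNIV::nat set) (\<le>) T (\<lambda>i j x. x)"
  unfolding top0_mono_directed_diagram_def using directed_nat t0_T mono_T by auto

lemma cont_cc: "continuous_map (T i) CC (cc i)"
  unfolding continuous_map
proof (intro conjI allI impI)
  show "cc i ` topspace (T i) \<subseteq> topspace CC" unfolding topspace_CC cc_def by auto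
next
  fix U assume "openin CC U"
  then have U: "PC U" by (simp add: openin_CC)
  have eq: "{x \<in> topspace (T i). cc i x \<in> U} = U \<union> (if 0 \<in> U then {1} else {})"
    using U unfolding topspace_T cc_def PC_def by auto
  have "PT i (U \<union> (if 0 \<in> U then {1} else {}))"
  proof (cases "0 \<in> U")
    case True
    then obtain m where m: "\<forall>k\<ge>m. k+2 \<in> U" using U unfolding PC_def by blast
    show ?thesis using True m unfolding PT_def by auto
  next
    case False
    then have "\<forall>k. k+2 \<notin> U" "1 \<notin> U" using U unfolding PC_def by blast+
    then show ?thesis using False unfolding PT_def by simp
  qed
  then show "openin (T i) {x \<in> topspace (T i). cc i x \<in> U}"
    unfolding eq openin_T .
qed

lemma cocone: "is_cocone (UNIV::nat set) (\<le>) T (\<lambda>i j x. x) CC cc"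
  unfolding is_cocone_def using cont_cc by (auto simp: cc_def)

lemma colimit: "top0_colimit (W::'w itself) (UNIV::nat set) (\<le>) T (\<lambda>i j x. x) CC cc"
  unfolding top0_colimit_def
proof (intro conjI allI impI)
  show "t0_space CC" by (rule t0_CC)
  show "is_cocone UNIV (\<le>) T (\<lambda>i j x. x) CC cc" by (rule cocone)
next
  fix V :: "'w topology" and d
  assume a: "t0_space V \<and> is_cocone UNIV (\<le>) T (\<lambda>i j x. x) V d"
  then have t0: "t0_space V" and dc: "\<And>i. continuous_map (T i) V (d i)"
    and dd: "\<And>i j x. i \<le> j \<Longrightarrow> d j x = d i x"
    unfolding is_cocone_def topspace_T by auto
  have d0: "d i x = d 0 x" for i x using dd[of 0 i] by simp
  have pre: "PT n {x. d 0 x \<in> Ob}" if "openin V Ob" for n Ob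
  proof -
    have "openin (T n) {x \<in> topspace (T n). d n x \<in> Ob}" using dc[of n] that
      unfolding continuous_map by auto
    moreover have "{x \<in> topspace (T n). d n x \<in> Ob} = {x. d 0 x \<in> Ob}"
      unfolding topspace_T using d0[of n] by simp
    ultimately show ?thesis unfolding openin_T by simp
  qed
  have d01: "d 0 0 = d 0 1"
  proof (rule ccontr)
    assume ne: "d 0 0 \<noteq> d 0 1"
    have "d 0 0 \<in> topspace V" "d 0 1 \<in> topspace V" using dc[of 0]
      unfolding continuous_map topspace_T by auto
    then obtain Ob where Ob: "openin V Ob" "(d 0 0 \<notin> Ob) = (d 0 1 \<in> Ob)"
      using t0 ne unfolding t0_space_def by blast
    consider "d 0 0 \<in> Ob" "d 0 1 \<notin> Ob" | "d 0 1 \<in> Ob" "d 0 0 \<notin> Ob" using Ob(2) by blast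
    then show False
    proof cases
      case 1
      have P: "PT (Suc m) {x. d 0 x \<in> Ob}" for m using pre Ob(1) by blast
      from 1 P[of 0] obtain m where "\<forall>k\<ge>m. d 0 (k+2) \<in> Ob" unfolding PT_def by auto
      then have "d 0 (m+2) \<in> Ob" by auto
      then show False using P[of m] 1 unfolding PT_def by auto
    next
      case 2
      then show False using pre[OF Ob(1), of 0] unfolding PT_def by auto
    qed
  qed
  show "\<exists>u. continuous_map CC V u \<and> (\<forall>i\<in>UNIV. \<forall>x\<in>topspace (T i). u (cc i x) = d i x)"
  proof (intro exI conjI ballI)
    show "continuous_map CC V (d 0)"
      unfolding continuous_map
    proof (intro conjI allI impI)
      show "d 0 ` topspace CC \<subseteq> topspace V" using dc[of 0] unfolding continuous_map topspace_T by auto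
    next
      fix Ob assume Ob: "openin V Ob"
      have "PT (Suc k) {x. d 0 x \<in> Ob}" for k using pre[OF Ob] .
      then have PS: "PT (Suc k) {x. d 0 x \<in> Ob}" for k by blast
      have "PC ({x. d 0 x \<in> Ob} - {1})" unfolding PC_def
      proof (intro conjI impI allI)
        assume "0 \<in> {x. d 0 x \<in> Ob} - {1}"
        then obtain m where "\<forall>k\<ge>m. d 0 (k+2) \<in> Ob" using PS[of 0] unfolding PT_def by auto
        then have "\<forall>k\<ge>m. k+2 \<in> {x. d 0 x \<in> Ob} - {1}" by simp
        then show "\<exists>m. \<forall>k\<ge>m. k+2 \<in> {x. d 0 x \<in> Ob} - {1}" by (rule exI)
      next
        fix k assume "k+2 \<in> {x. d 0 x \<in> Ob} - {1}"
        then show "0 \<in> {x. d 0 x \<in> Ob} - {1}" using PS[of k] unfolding PT_def by auto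
      qed simp
      moreover have "{x \<in> topspace CC. d 0 x \<in> Ob} = {x. d 0 x \<in> Ob} - {1}" unfolding topspace_CC by auto
      ultimately show "openin CC {x \<in> topspace CC. d 0 x \<in> Ob}" by (simp add: openin_CC)
    qed
  next
    fix i x assume "i \<in> (UNIV::nat set)" "x \<in> topspace (T i)"
    show "d 0 (cc i x) = d i x" using d01 d0[of i x] unfolding cc_def by auto
  qed
  fix u v assume h: "continuous_map CC V u \<and> continuous_map CC V v \<and>
           (\<forall>i\<in>UNIV. \<forall>x\<in>topspace (T i). u (cc i x) = d i x) \<and>
           (\<forall>i\<in>UNIV. \<forall>x\<in>topspace (T i). v (cc i x) = d i x)"
  show "\<forall>y\<in>topspace CC. u y = v y"
  proof
    fix y assume y: "y \<in> topspace CC"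
    then have "cc 0 y = y" unfolding topspace_CC cc_def by auto
    moreover have "u (cc 0 y) = d 0 y" "v (cc 0 y) = d 0 y" using h unfolding topspace_T by blast+
    ultimately show "u y = v y" by simp
  qed
qed

theorem corollary5p5:
  fixes X :: "'a topology"
  assumes "t0_space X"
  shows "(topspace X = {} \<longrightarrow>
            top0_finitely_generated TYPE('i) TYPE('z) TYPE('c) TYPE('w) X) \<and>
         (top0_finitely_generated TYPE(nat) TYPE(nat) TYPE(nat) TYPE('w) X \<longrightarrow>
            topspace X = {})"
proof (intro conjI impI)
  assume e: "topspace X = {}"
  show "top0_finitely_generated TYPE('i) TYPE('z) TYPE('c) TYPE('w) X"
    unfolding top0_finitely_generated_def
  proof (intro allI impI conjI)
    fix I :: "'i set" and le Z z and C :: "'c topology" and c f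
    assume h: "top0_mono_directed_diagram TYPE('w) I le Z z \<and> top0_colimit TYPE('w) I le Z z C c"
    then have dp: "directed_poset I le" unfolding top0_mono_directed_diagram_def by auto
    then have refl: "\<forall>i\<in>I. le i i" and ub: "\<forall>F. finite F \<and> F \<subseteq> I \<longrightarrow> (\<exists>u\<in>I. \<forall>i\<in>F. le i u)"
      unfolding directed_poset_def by simp_all
    from ub[rule_format, of "{}"] obtain u where u: "u \<in> I" by auto
    have "continuous_map X (Z u) (\<lambda>x. undefined)" using e
      by (simp add: continuous_map)
    then show "\<exists>i\<in>I. \<exists>g. continuous_map X (Z i) g \<and> (\<forall>x\<in>topspace X. f x = c i (g x))"
      using u e by blast
    show "\<forall>i\<in>I. \<forall>g g'. continuous_map X (Z i) g \<and> continuous_map X (Z i) g' \<and>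
               (\<forall>x\<in>topspace X. f x = c i (g x)) \<and> (\<forall>x\<in>topspace X. f x = c i (g' x)) \<longrightarrow>
               (\<exists>j\<in>I. le i j \<and> (\<forall>x\<in>topspace X. z i j (g x) = z i j (g' x)))"
      using refl e by blast
  qed
next
  assume fg: "top0_finitely_generated TYPE(nat) TYPE(nat) TYPE(nat) TYPE('w) X"
  show "topspace X = {}"
  proof (rule ccontr)
    assume ne: "topspace X \<noteq> {}"
    then obtain x0 where x0: "x0 \<in> topspace X" by blast
    have cf: "continuous_map X CC (\<lambda>x. 0)" by (simp add: topspace_CC)
    have cg: "continuous_map X (T 0) (\<lambda>x. b)" for b by (simp add: topspace_T)
    note H0 = fg[unfolded top0_finitely_generated_def]
    note H1 = H0[THEN spec[of _ UNIV], THEN spec[of _ "(\<le>)"], THEN spec[of _ T],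
      THEN spec[of _ "\<lambda>i j x. x"], THEN spec[of _ CC], THEN spec[of _ cc], THEN mp,
      OF conjI[OF diagram colimit], THEN spec[of _ "\<lambda>x. 0"], THEN mp, OF cf, THEN conjunct2,
      THEN bspec[of _ _ 0], OF UNIV_I, THEN spec[of _ "\<lambda>x. 0"], THEN spec[of _ "\<lambda>x. 1"], THEN mp]
    have "\<exists>j\<in>UNIV. (0::nat) \<le> j \<and> (\<forall>x\<in>topspace X. (0::nat) = 1)"
      by (rule H1) (simp add: topspace_T cc_def)
    then show False using x0 by auto
  qed
qed

end
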